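(* Let $P_1\ge P_2\ge\cdots\ge P_K\ge0$ with $P_1>0$. For any nonempty set $A\subseteq\{1,\dots,K\}$ with $l=\min A$, $$\frac12\log\left(1+\Big(\sum_{j\in A}\sqrt{P_j}\Big)^2\right)-\left[\frac12\log\left(\Big(\frac1{\sum_{j=1}^KP_j}+1\Big)P_l\right)\right]^+\le\log K.$$
   Context: Logarithms are base 2, $[x]^+=\max\{x,0\}$, and $[\log 0]^+=0$. *)

theory Defs
  imports "HOL-Analysis.Analysis"
begin

definition pos_log2 :: "real \<Rightarrow> real" where
  "pos_log2 x = (if x \<le> 0 then 0 else max (log 2 x) 0)"

end

theory Submission imports Defs begin
lemma key:
  fixes k m p T s2 :: real
  assumes "k \<ge> 1" "m \<ge> 1" "m \<le> k" "p \<ge> 0" "T > 0" "s2 \<le> m^2 * p"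
    and "m = k \<Longrightarrow> T \<le> k * p"
    and "m < k \<Longrightarrow> m + 1 \<le> k"
  shows "1 + s2 \<le> k^2 * max 1 ((1/T+1)*p)"
proof (cases "(1/T+1)*p \<ge> 1")
  case True
  hence Q: "p*(T+1) \<ge> T" using assms by (simp add: field_simps)
  have "1 + m^2*p \<le> k^2 * ((1/T+1)*p)"
  proof (cases "m = k")
    case True
    have "k*(k*p) \<ge> k*T" using assms True by (intro mult_left_mono) auto
    moreover have "k*T \<ge> T" using assms by simp
    ultimately have "k^2*p \<ge> T" by (simp add: power2_eq_square mult.assoc)
    hence "k^2*p/T \<ge> 1" using assms by simp
    then show ?thesis using True assms by (simp add: field_simps)
  next
    case False
    hence "m+1 \<le> k" using assms by auto
    hence "(m+1)*(m+1) \<le> k*k" using assms by (intro mult_mono) auto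
    hence k2: "k^2 \<ge> m^2 + 3" using assms by (simp add: power2_eq_square algebra_simps)
    have "(k^2-m^2)*p \<ge> 3*p" using k2 assms by (intro mult_right_mono) auto
    moreover have "k^2 \<ge> 1" using assms by (simp add: one_le_power)
    hence "k^2*p \<ge> 1*p" using assms by (intro mult_right_mono) auto
    hence "k^2*p/T \<ge> p/T" using assms by (intro divide_right_mono) auto
    moreover have "3*p + p/T \<ge> 1"
    proof -
      have "T*p \<ge> 0" using assms by simp
      hence "3*p*T + p \<ge> T" using Q by (simp add: algebra_simps)
      hence "(3*p*T + p)/T \<ge> 1" using assms by simp
      thus ?thesis using assms by (simp add: field_simps)
    qed
    ultimately have "(k^2 - m^2)*p + k^2*p/T \<ge> 1" by linarith
    thus ?thesis using assms by (simp add: field_simps)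
  qed
  then show ?thesis using True assms by simp
next
  case False
  hence Q: "p*(T+1) < T" using assms by (simp add: field_simps)
  have "1 + m^2*p \<le> k^2"
  proof (cases "m = k")
    case True
    have "T*(T+1) \<le> k*p*(T+1)" using assms True by (intro mult_right_mono) auto
    also have "\<dots> < k*T" using Q assms by (simp add: mult.assoc)
    finally have "T+1 < k" using assms by (simp add: mult.commute)
    have "k*(p*(T+1)) < k*T" using Q assms by (intro mult_strict_left_mono) auto
    hence "p*k*(T+1) < k*T" by (simp add: algebra_simps)
    also have "k*T < (k-1)*(T+1)" using \<open>T+1<k\<close> by (simp add: algebra_simps)
    finally have "p*k < k-1" using assms by simp
    hence "k*(p*k) \<le> k*(k-1)" using assms by (intro mult_left_mono) auto
    hence "k^2*p \<le> k^2 - 1" using assms by (simp add: power2_eq_square algebra_simps)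
    thus ?thesis using True by simp
  next
    case False
    hence "m+1 \<le> k" using assms by auto
    hence "(m+1)*(m+1) \<le> k*k" using assms by (intro mult_mono) auto
    hence k2: "k^2 \<ge> m^2 + 1" using assms by (simp add: power2_eq_square algebra_simps)
    have "p*(T+1) < 1*(T+1)" using Q by simp
    hence "p < 1" using assms by (subst (asm) mult_less_cancel_right) auto
    hence "p \<le> 1" by simp
    hence "m^2 * p \<le> m^2" by (simp add: mult_left_le)
    thus ?thesis using k2 by linarith
  qed
  moreover have "max 1 ((1/T+1)*p) = 1" using False by simp
  ultimately show ?thesis using assms by simp
qed

theorem lemma5:
  fixes K :: nat and P :: "nat \<Rightarrow> real" and A :: "nat set"
  assumes K_pos: "K \<ge> 1"
    and mono: "\<And>i j. 1 \<le> i \<Longrightarrow> i \<le> j \<Longrightarrow> j \<le> K \<Longrightarrow> P j \<le> P i"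
    and nonneg: "\<And>j. 1 \<le> j \<Longrightarrow> j \<le> K \<Longrightarrow> P j \<ge> 0"
    and P1: "P 1 > 0"
    and A_sub: "A \<subseteq> {1..K}" and A_ne: "A \<noteq> {}"
  shows "(1/2) * log 2 (1 + (\<Sum>j\<in>A. sqrt (P j))^2)
           - (1/2) * pos_log2 ((1 / (\<Sum>j=1..K. P j) + 1) * P (Min A))
         \<le> log 2 (real K)"
proof -
  define T where "T = (\<Sum>j=1..K. P j)"
  define l where "l = Min A"
  define m where "m = card A"
  define S where "S = (\<Sum>j\<in>A. sqrt (P j))"
  define Q where "Q = (1/T+1) * P l"
  have finA: "finite A" using A_sub finite_subset by blast
  have lA: "l \<in> A" unfolding l_def using finA A_ne by simp
  have l1: "1 \<le> l" "l \<le> K" using lA A_sub by auto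
  have Pl: "P l \<ge> 0" using nonneg l1 by simp
  have "T = P 1 + (\<Sum>j=2..K. P j)" unfolding T_def using K_pos
    by (metis One_nat_def Suc_1 sum.atLeast_Suc_atMost)
  moreover have "(\<Sum>j=2..K. P j) \<ge> 0" by (intro sum_nonneg nonneg) auto
  ultimately have Tpos: "T > 0" using P1 by simp
  have mK: "m \<le> K" unfolding m_def using card_mono[OF _ A_sub] by simp
  have m1: "m \<ge> 1" unfolding m_def using finA A_ne by (simp add: Suc_le_eq card_gt_0_iff)
  have S0: "S \<ge> 0" unfolding S_def using A_sub nonneg by (intro sum_nonneg) (auto simp: subset_iff)
  have "S \<le> (\<Sum>j\<in>A. sqrt (P l))" unfolding S_def
  proof (intro sum_mono)
    fix j assume "j \<in> A"
    hence "l \<le> j" "j \<le> K" using finA A_sub unfolding l_def by auto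
    thus "sqrt (P j) \<le> sqrt (P l)" using mono l1 by simp
  qed
  hence "S \<le> real m * sqrt (P l)" unfolding m_def by simp
  hence "S^2 \<le> (real m * sqrt (P l))^2" using S0 by (intro power_mono) auto
  hence S2: "S^2 \<le> (real m)^2 * P l" using Pl by (simp add: power_mult_distrib)
  have eqK: "T \<le> real K * P l" if "real m = real K"
  proof -
    have "A = {1..K}" using that A_sub unfolding m_def by (intro card_subset_eq) auto
    hence "l = 1" unfolding l_def using K_pos by (auto intro!: Min_eqI)
    have "T \<le> (\<Sum>j=1..K. P 1)" unfolding T_def by (intro sum_mono mono) auto
    thus ?thesis using \<open>l = 1\<close> by simp
  qed
  have ltK: "real m + 1 \<le> real K" if "real m < real K" using that by simp
  have key1: "1 + S^2 \<le> (real K)^2 * max 1 Q" unfolding Q_def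
    using key[of "real K" "real m" "P l" T "S^2"] K_pos m1 mK Pl Tpos S2 eqK ltK by simp
  have Q0: "Q \<ge> 0" unfolding Q_def using Tpos Pl by simp
  have pl: "pos_log2 Q = log 2 (max 1 Q)"
    unfolding pos_log2_def using Q0 by (auto simp: max_def)
  have "log 2 (1 + S^2) \<le> log 2 ((real K)^2 * max 1 Q)"
    using key1 by (intro log_mono) (auto intro: add_pos_nonneg)
  also have "\<dots> = 2 * log 2 (real K) + log 2 (max 1 Q)"
    using K_pos by (simp add: log_mult log_nat_power)
  finally show ?thesis unfolding T_def[symmetric] l_def[symmetric] S_def[symmetric] Q_def[symmetric] pl
    by simp
qed

end
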